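(* For every $n\ge 1$, $2w_n\in C(2q_n)$ and $2r_n\in C(2q_n)$, where $w_n=x_1\cdots x_n(x_1^2+1)$, $q_n=x_1^3x_2\cdots x_n$ and $r_n=x_1\cdots x_n$.
   Context: All operations are on $\mathbb{Z}_8$. For an operation $f$, $C(f)$ denotes the clone generated by $f$ together with binary addition and all unary constant operations. *)

theory Defs
  imports Main "HOL-Library.Numeral_Type"
begin

text \<open>Elements of Z_8 are the type 8 (ring of integers modulo 8).
  A finitary operation is a pair (k, F) with arity k and
  F :: (nat => 8) => 8 reading only the arguments x 0, ..., x (k-1).\<close>

type_synonym op8 = "nat \<times> ((nat \<Rightarrow> 8) \<Rightarrow> 8)"

inductive_set clone_gen :: "op8 set \<Rightarrow> op8 set" for G :: "op8 set" where
  proj: "i < k \<Longrightarrow> (k, \<lambda>x. x i) \<in> clone_gen G"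
| gen: "p \<in> G \<Longrightarrow> p \<in> clone_gen G"
| comp: "(m, f) \<in> clone_gen G \<Longrightarrow> (\<forall>j<m. (k, g j) \<in> clone_gen G)
          \<Longrightarrow> (k, \<lambda>x. f (\<lambda>j. g j x)) \<in> clone_gen G"

definition C :: "op8 \<Rightarrow> op8 set" where
  "C f = clone_gen ({f, (2, \<lambda>x. x 0 + x 1)} \<union> {(1, \<lambda>x. c) | c. True})"

text \<open>Variables x_1,...,x_n are x 0,...,x (n-1).\<close>
definition r_op :: "nat \<Rightarrow> (nat \<Rightarrow> 8) \<Rightarrow> 8" where
  "r_op n x = (\<Prod>i<n. x i)"

definition q_op :: "nat \<Rightarrow> (nat \<Rightarrow> 8) \<Rightarrow> 8" where
  "q_op n x = x 0 ^ 3 * (\<Prod>i\<in>{1..<n}. x i)"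

definition w_op :: "nat \<Rightarrow> (nat \<Rightarrow> 8) \<Rightarrow> 8" where
  "w_op n x = (\<Prod>i<n. x i) * (x 0 ^ 2 + 1)"

end

theory Submission
  imports Defs
begin

lemma el8: "(x::8) = 0 \<or> x = 1 \<or> x = 2 \<or> x = 3 \<or> x = 4 \<or> x = 5 \<or> x = 6 \<or> x = 7"
proof (cases x)
  case (of_int z)
  then have "z \<in> {0..7}" by auto
  then have "z = 0 \<or> z = 1 \<or> z = 2 \<or> z = 3 \<or> z = 4 \<or> z = 5 \<or> z = 6 \<or> z = 7" by auto
  then show ?thesis using of_int by auto
qed

lemma ident: "2 * (x::8) * y = 2 * y^3 * (x+1) + 2 * x^3 * (x+y+1) + 3 * (2 * (x+y)^3 * (x+1))"
  using el8[of x] el8[of y] by (elim disjE) simp_all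

lemma C_proj: "i < k \<Longrightarrow> (k, \<lambda>x. x i) \<in> C F"
  unfolding C_def by (rule clone_gen.proj)

lemma C_comp: "(m, f) \<in> C F \<Longrightarrow> (\<forall>j<m. (k, g j) \<in> C F) \<Longrightarrow> (k, \<lambda>x. f (\<lambda>j. g j x)) \<in> C F"
  unfolding C_def by (rule clone_gen.comp)

lemma C_add: assumes "(k, a) \<in> C F" "(k, b) \<in> C F" shows "(k, \<lambda>x. a x + b x) \<in> C F"
proof -
  have g: "(2::nat, \<lambda>x::nat\<Rightarrow>8. x 0 + x 1) \<in> C F" unfolding C_def by (rule clone_gen.gen) simp
  have "(k, \<lambda>x. (\<lambda>y::nat\<Rightarrow>8. y 0 + y 1) (\<lambda>j. (if j = 0 then a else b) x)) \<in> C F"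
    by (rule C_comp[OF g]) (auto simp: assms less_2_cases_iff)
  then show ?thesis by simp
qed

lemma C_const: assumes "k \<ge> 1" shows "(k, \<lambda>x. c) \<in> C F"
proof -
  have g: "(1::nat, \<lambda>x::nat\<Rightarrow>8. c) \<in> C F" unfolding C_def by (rule clone_gen.gen) auto
  have "(k, \<lambda>x. (\<lambda>y::nat\<Rightarrow>8. c) (\<lambda>j. (\<lambda>x. x 0) x)) \<in> C F"
    by (rule C_comp[OF g, where g="\<lambda>j x. x 0"]) (use assms in \<open>auto intro: C_proj\<close>)
  then show ?thesis by simp
qed


lemma C_f: assumes "\<forall>j<n. (k, g j) \<in> C (n, \<lambda>x. 2 * q_op n x)"
  shows "(k, \<lambda>x. 2 * q_op n (\<lambda>j. g j x)) \<in> C (n, \<lambda>x. 2 * q_op n x)"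
proof -
  have "(n, \<lambda>x. 2 * q_op n x) \<in> C (n, \<lambda>x. 2 * q_op n x)" unfolding C_def by (rule clone_gen.gen) simp
  from C_comp[OF this assms] show ?thesis .
qed

definition R :: "nat \<Rightarrow> (nat \<Rightarrow> 8) \<Rightarrow> 8" where "R n x = (\<Prod>i\<in>{2..<n}. x i)"

lemma q_split: assumes "n \<ge> 2" "\<forall>j\<in>{2..<n}. h j = x j"
  shows "q_op n h = (h 0)^3 * (h 1 * R n x)"
proof -
  have "(\<Prod>i\<in>{1..<n}. h i) = h 1 * (\<Prod>i\<in>{Suc 1..<n}. h i)"
    using assms(1) by (subst prod.atLeast_Suc_lessThan) auto
  also have "(\<Prod>i\<in>{Suc 1..<n}. h i) = R n x" unfolding R_def
    using assms(2) by (intro prod.cong) auto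
  finally show ?thesis unfolding q_op_def by simp
qed

lemma r_split: assumes "n \<ge> 2" shows "r_op n x = x 0 * (x 1 * R n x)"
proof -
  have "r_op n x = (\<Prod>i\<in>{0..<n}. x i)" unfolding r_op_def by (simp add: lessThan_atLeast0)
  also have "\<dots> = x 0 * (\<Prod>i\<in>{Suc 0..<n}. x i)"
    using assms by (subst prod.atLeast_Suc_lessThan) auto
  also have "(\<Prod>i\<in>{Suc 0..<n}. x i) = x 1 * (\<Prod>i\<in>{Suc 1..<n}. x i)"
    using assms by (subst prod.atLeast_Suc_lessThan) auto
  finally show ?thesis unfolding R_def by (simp add: numeral_2_eq_2)
qed

lemma C_term: assumes "n \<ge> 2" "(n, a) \<in> C (n, \<lambda>x. 2 * q_op n x)" "(n, b) \<in> C (n, \<lambda>x. 2 * q_op n x)"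
  shows "(n, \<lambda>x. 2 * (a x)^3 * (b x * R n x)) \<in> C (n, \<lambda>x. 2 * q_op n x)"
proof -
  define g where "g j = (if j = 0 then a else if j = 1 then b else (\<lambda>x::nat\<Rightarrow>8. x j))" for j
  have "(n, \<lambda>x. 2 * q_op n (\<lambda>j. g j x)) \<in> C (n, \<lambda>x. 2 * q_op n x)"
    by (rule C_f) (auto simp: g_def assms intro: C_proj)
  moreover have "q_op n (\<lambda>j. g j x) = (a x)^3 * (b x * R n x)" for x
    by (subst q_split[OF assms(1), of _ x]) (auto simp: g_def)
  ultimately show ?thesis by (simp add: mult.assoc)
qed

lemma r_in: assumes "n \<ge> 1" shows "(n, \<lambda>x. 2 * r_op n x) \<in> C (n, \<lambda>x. 2 * q_op n x)"
proof (cases "n = 1")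
  case True
  have "(n, \<lambda>x. x 0 + x 0) \<in> C (n, \<lambda>x. 2 * q_op n x)"
    by (rule C_add) (use assms in \<open>auto intro: C_proj\<close>)
  moreover have r1: "r_op n x = x 0" for x using True by (simp add: r_op_def)
  have "(\<lambda>x. 2 * r_op n x) = (\<lambda>x. x 0 + x 0)" by (rule ext) (simp only: r1 mult_2)
  ultimately show ?thesis by (simp only:)
next
  case False
  then have n2: "n \<ge> 2" using assms by auto
  let ?F = "C (n, \<lambda>x. 2 * q_op n x)"
  have p0: "(n, \<lambda>x. x 0) \<in> ?F" and p1: "(n, \<lambda>x. x 1) \<in> ?F" using n2 by (auto intro: C_proj)
  have c1: "(n, \<lambda>x. 1) \<in> ?F" using n2 by (auto intro: C_const)
  have a01: "(n, \<lambda>x. x 0 + 1) \<in> ?F" by (rule C_add[OF p0 c1])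
  have a0p1: "(n, \<lambda>x. x 0 + x 1) \<in> ?F" by (rule C_add[OF p0 p1])
  have a011: "(n, \<lambda>x. x 0 + x 1 + 1) \<in> ?F" by (rule C_add[OF a0p1 c1])
  have t1: "(n, \<lambda>x. 2 * (x 1)^3 * ((x 0 + 1) * R n x)) \<in> ?F" by (rule C_term[OF n2 p1 a01])
  have t2: "(n, \<lambda>x. 2 * (x 0)^3 * ((x 0 + x 1 + 1) * R n x)) \<in> ?F" by (rule C_term[OF n2 p0 a011])
  have t3: "(n, \<lambda>x. 2 * (x 0 + x 1)^3 * ((x 0 + 1) * R n x)) \<in> ?F" by (rule C_term[OF n2 a0p1 a01])
  have s: "(n, \<lambda>x. 2 * (x 1)^3 * ((x 0 + 1) * R n x) + 2 * (x 0)^3 * ((x 0 + x 1 + 1) * R n x)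
     + (2 * (x 0 + x 1)^3 * ((x 0 + 1) * R n x) + 2 * (x 0 + x 1)^3 * ((x 0 + 1) * R n x)
        + 2 * (x 0 + x 1)^3 * ((x 0 + 1) * R n x))) \<in> ?F"
    by (intro C_add t1 t2 t3)
  have eq: "2 * r_op n x = 2 * (x 1)^3 * ((x 0 + 1) * R n x) + 2 * (x 0)^3 * ((x 0 + x 1 + 1) * R n x)
     + (2 * (x 0 + x 1)^3 * ((x 0 + 1) * R n x) + 2 * (x 0 + x 1)^3 * ((x 0 + 1) * R n x)
        + 2 * (x 0 + x 1)^3 * ((x 0 + 1) * R n x))" for x
  proof -
    have "2 * r_op n x = (2 * x 0 * x 1) * R n x" using r_split[OF n2] by (simp add: mult.assoc)
    also have "\<dots> = (2 * (x 1)^3 * (x 0 + 1) + 2 * (x 0)^3 * (x 0 + x 1 + 1) + 3 * (2 * (x 0 + x 1)^3 * (x 0 + 1))) * R n x"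
      by (subst ident) (rule refl)
    finally show ?thesis by (simp add: distrib_right mult.assoc numeral_3_eq_3)
  qed
  have "(\<lambda>x. 2 * r_op n x) = (\<lambda>x. 2 * (x 1)^3 * ((x 0 + 1) * R n x) + 2 * (x 0)^3 * ((x 0 + x 1 + 1) * R n x)
     + (2 * (x 0 + x 1)^3 * ((x 0 + 1) * R n x) + 2 * (x 0 + x 1)^3 * ((x 0 + 1) * R n x)
        + 2 * (x 0 + x 1)^3 * ((x 0 + 1) * R n x)))" by (rule ext) (rule eq)
  with s show ?thesis by (simp only:)
qed

theorem lemma4p6:
  fixes n :: nat
  assumes "n \<ge> 1"
  shows "(n, \<lambda>x. 2 * w_op n x) \<in> C (n, \<lambda>x. 2 * q_op n x)
       \<and> (n, \<lambda>x. 2 * r_op n x) \<in> C (n, \<lambda>x. 2 * q_op n x)"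
proof
  have r: "(n, \<lambda>x. 2 * r_op n x) \<in> C (n, \<lambda>x. 2 * q_op n x)" by (rule r_in[OF assms])
  then show "(n, \<lambda>x. 2 * r_op n x) \<in> C (n, \<lambda>x. 2 * q_op n x)" .
  have q: "(n, \<lambda>x. 2 * q_op n x) \<in> C (n, \<lambda>x. 2 * q_op n x)" unfolding C_def by (rule clone_gen.gen) simp
  have "(n, \<lambda>x. 2 * q_op n x + 2 * r_op n x) \<in> C (n, \<lambda>x. 2 * q_op n x)" by (rule C_add[OF q r])
  moreover have "2 * w_op n x = 2 * q_op n x + 2 * r_op n x" for x
  proof -
    have h: "(\<Prod>i<n. x i) = x 0 * (\<Prod>i\<in>{1..<n}. x i)"
      using assms by (simp add: lessThan_atLeast0 prod.atLeast_Suc_lessThan)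
    show ?thesis unfolding w_op_def q_op_def r_op_def h
      by (simp add: power2_eq_square power3_eq_cube distrib_left distrib_right mult.commute mult.left_commute)
  qed
  ultimately show "(n, \<lambda>x. 2 * w_op n x) \<in> C (n, \<lambda>x. 2 * q_op n x)" by simp
qed

end
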